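(* Fix a finite number $E$ of observed environments $\mathcal{E}_{obs}=\{1,\dots,E\}$ and take the collection of environments of interest to be $\mathcal{E}=\mathcal{E}_{obs}$, with $p(e)$ the uniform distribution on $\mathcal{E}_{obs}$. In the setting described in the context, assume: (Invariance) there exists $z^*\in\{0,1\}^p$ such that $p_e(y\mid x^{z^*})$ is the same for all $e\in\mathcal{E}_{obs}$; (Uniqueness) this $z^*$ is unique; (Prior positivity) $p(z^* )>0$; (Estimation consistency given fixed environments) for every $z$ with $p(z)>0$, as $n\to\infty$, $$\frac{1}{nE}\sum_{i=1}^n\sum_{e=1}^E\log\hat p_e(y_{ei}\mid x_{ei}^z)\xrightarrow{P}\mathbb{E}_{p(e)p_e(y,x^z)}[\log p_e(y\mid x^z)],\qquad \frac{1}{nE}\sum_{i=1}^n\sum_{e=1}^E\log\hat g(y_{ei}\mid x_{ei}^z)\xrightarrow{P}\mathbb{E}_{p(e)p_e(y,x^z)}[\log g(y\mid x^z)].$$ Then, as $n\to\infty$ (with $E$ fixed): (i) $\hat z_{n,E}:=\arg\max_z\hat p(z\mid\mathcal{D})\xrightarrow{P}z^*$; and (ii) $\hat p(z^*\mid\mathcal{D})\xrightarrow{P}1$.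
   Context: Features $x\in\mathbb{R}^p$, outcome $y$. For $z\in\{0,1\}^p$, $x^z$ is the subvector of coordinates $j$ with $z^{(j)}=1$ and $x^{-z}$ the rest. Each environment $e$ has a joint density $p_e(x,y)$, from which $p_e(x^z)$, $p_e(y\mid x^z)$ are derived. The pooled conditional is $g(y\mid x^z):=\frac{\sum_{e=1}^E\int p_e(x,y)\,\mathrm{d}x^{-z}}{\sum_{e=1}^E p_e(x^z)}$. Data: in each environment $e=1,\dots,E$, $n$ i.i.d. observations $(x_{ei},y_{ei})$ drawn from $p_e(x,y)$; $\mathcal{D}$ is all data. A prior $p(z)$ on $\{0,1\}^p$ is given. For each $z$ a model class $\mathcal{P}_{y\mid x^z}$ is fixed; $\hat p_e(y\mid x^z)$ maximizes $\sum_{i=1}^n\log\tilde p(y_{ei}\mid x_{ei}^z)$ and $\hat g(y\mid x^z)$ maximizes $\sum_{e=1}^E\sum_{i=1}^n\log\tilde p(y_{ei}\mid x_{ei}^z)$ over $\tilde p\in\mathcal{P}_{y\mid x^z}$. The estimated BIP posterior is $\hat p(z\mid\mathcal{D})\propto p(z)\prod_{e=1}^E\prod_{i=1}^n\frac{\hat g(y_{ei}\mid x_{ei}^z)}{\hat p_e(y_{ei}\mid x_{ei}^z)}$. *)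

theory Defs
  imports "HOL-Probability.Probability"
begin

text \<open>Features x are functions nat => real, meaningful on coordinates {..<p}
  (elements of PiE {..<p} UNIV).  A selection z in {0,1}^p is a subset of {..<p};
  x^z is the restriction of x to z.  The outcome y lives in a measure space nu, and
  joint densities p_e(x,y) are taken w.r.t. (Lebesgue on R^p) x nu.
  Environments are indexed by e in {..<E}.\<close>

definition xsub :: "nat set \<Rightarrow> (nat \<Rightarrow> real) \<Rightarrow> (nat \<Rightarrow> real)" where
  "xsub z x = restrict x z"

definition Xmeas :: "nat \<Rightarrow> (nat \<Rightarrow> real) measure" where
  "Xmeas p = PiM {..<p} (\<lambda>_. lborel)"

definition XZYmeas :: "nat set \<Rightarrow> 'y measure \<Rightarrow> ((nat \<Rightarrow> real) \<times> 'y) measure" where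
  "XZYmeas z \<nu> = (PiM z (\<lambda>_. lborel)) \<Otimes>\<^sub>M \<nu>"

definition joint_z :: "nat \<Rightarrow> ((nat \<Rightarrow> real) \<Rightarrow> 'y \<Rightarrow> real) \<Rightarrow> nat set
    \<Rightarrow> (nat \<Rightarrow> real) \<Rightarrow> 'y \<Rightarrow> real" where
  "joint_z p f z xz y =
     (\<integral>x'. f (merge z ({..<p} - z) (xz, x')) y \<partial>(PiM ({..<p} - z) (\<lambda>_. lborel)))"

definition marg_z :: "nat \<Rightarrow> 'y measure \<Rightarrow> ((nat \<Rightarrow> real) \<Rightarrow> 'y \<Rightarrow> real) \<Rightarrow> nat set
    \<Rightarrow> (nat \<Rightarrow> real) \<Rightarrow> real" where
  "marg_z p \<nu> f z xz = (\<integral>y. joint_z p f z xz y \<partial>\<nu>)"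

definition cond_z :: "nat \<Rightarrow> 'y measure \<Rightarrow> ((nat \<Rightarrow> real) \<Rightarrow> 'y \<Rightarrow> real) \<Rightarrow> nat set
    \<Rightarrow> (nat \<Rightarrow> real) \<Rightarrow> 'y \<Rightarrow> real" where
  "cond_z p \<nu> f z xz y = joint_z p f z xz y / marg_z p \<nu> f z xz"

definition pooled_z :: "nat \<Rightarrow> 'y measure \<Rightarrow> nat \<Rightarrow> (nat \<Rightarrow> (nat \<Rightarrow> real) \<Rightarrow> 'y \<Rightarrow> real)
    \<Rightarrow> nat set \<Rightarrow> (nat \<Rightarrow> real) \<Rightarrow> 'y \<Rightarrow> real" where
  "pooled_z p \<nu> E pd z xz y =
     (\<Sum>e<E. joint_z p (pd e) z xz y) / (\<Sum>e<E. marg_z p \<nu> (pd e) z xz)"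

text \<open>Invariance: p_e(y|x^z) is the same (conditional density) q(y|x^z) for all e,
  i.e. p_e(x^z,y) = p_e(x^z) q(y|x^z) almost everywhere, for every e.\<close>
definition invariant_z :: "nat \<Rightarrow> 'y measure \<Rightarrow> nat \<Rightarrow> (nat \<Rightarrow> (nat \<Rightarrow> real) \<Rightarrow> 'y \<Rightarrow> real)
    \<Rightarrow> nat set \<Rightarrow> bool" where
  "invariant_z p \<nu> E pd z \<longleftrightarrow>
     (\<exists>q. \<forall>e<E. AE w in XZYmeas z \<nu>.
        joint_z p (pd e) z (fst w) (snd w) = marg_z p \<nu> (pd e) z (fst w) * q (fst w) (snd w))"

definition distr_z :: "nat \<Rightarrow> 'y measure \<Rightarrow> ((nat \<Rightarrow> real) \<Rightarrow> 'y \<Rightarrow> real) \<Rightarrow> nat set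
    \<Rightarrow> ((nat \<Rightarrow> real) \<times> 'y) measure" where
  "distr_z p \<nu> f z = density (XZYmeas z \<nu>) (\<lambda>w. ennreal (joint_z p f z (fst w) (snd w)))"

text \<open>E_{p(e) p_e(y,x^z)}[log p_e(y|x^z)] with p(e) uniform on the E environments\<close>
definition exp_log_cond :: "nat \<Rightarrow> 'y measure \<Rightarrow> nat \<Rightarrow> (nat \<Rightarrow> (nat \<Rightarrow> real) \<Rightarrow> 'y \<Rightarrow> real)
    \<Rightarrow> nat set \<Rightarrow> real" where
  "exp_log_cond p \<nu> E pd z = (1 / real E) *
     (\<Sum>e<E. \<integral>w. ln (cond_z p \<nu> (pd e) z (fst w) (snd w)) \<partial>(distr_z p \<nu> (pd e) z))"

definition exp_log_pooled :: "nat \<Rightarrow> 'y measure \<Rightarrow> nat \<Rightarrow> (nat \<Rightarrow> (nat \<Rightarrow> real) \<Rightarrow> 'y \<Rightarrow> real)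
    \<Rightarrow> nat set \<Rightarrow> real" where
  "exp_log_pooled p \<nu> E pd z = (1 / real E) *
     (\<Sum>e<E. \<integral>w. ln (pooled_z p \<nu> E pd z (fst w) (snd w)) \<partial>(distr_z p \<nu> (pd e) z))"

definition elog :: "real \<Rightarrow> ereal" where
  "elog x = (if 0 < x then ereal (ln x) else -\<infinity>)"

definition conv_in_prob :: "'w measure \<Rightarrow> (nat \<Rightarrow> 'w \<Rightarrow> ereal) \<Rightarrow> real \<Rightarrow> bool" where
  "conv_in_prob M Z c \<longleftrightarrow>
     (\<forall>\<epsilon>>0. (\<lambda>n. measure M {\<omega> \<in> space M. ereal \<epsilon> < \<bar>Z n \<omega> - ereal c\<bar>}) \<longlonglongrightarrow> 0)"

text \<open>Estimated BIP posterior hat p(z | D) for the data D_n (first n samples of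
  each environment), normalised over z in Zs = {0,1}^p.\<close>
definition bip_weight where
  "bip_weight E prior phat ghat X Y n \<omega> z =
     prior z * (\<Prod>e<E. \<Prod>i<n.
        ghat n z \<omega> (xsub z (X e i \<omega>)) (Y e i \<omega>) / phat n e z \<omega> (xsub z (X e i \<omega>)) (Y e i \<omega>))"

definition bip_post where
  "bip_post Zs E prior phat ghat X Y n \<omega> z =
     bip_weight E prior phat ghat X Y n \<omega> z / (\<Sum>z'\<in>Zs. bip_weight E prior phat ghat X Y n \<omega> z')"

end

theory Submission
  imports Defs
begin

lemma joint_facts:
  fixes p :: nat and \<nu> :: "'y measure" and f :: "(nat \<Rightarrow> real) \<Rightarrow> 'y \<Rightarrow> real" and z :: "nat set"
  assumes nu: "sigma_finite_measure \<nu>"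
    and nonneg: "\<And>x y. 0 \<le> f x y"
    and meas[measurable]: "(\<lambda>w. f (fst w) (snd w)) \<in> borel_measurable (Xmeas p \<Otimes>\<^sub>M \<nu>)"
    and tot: "(\<integral>\<^sup>+ w. ennreal (f (fst w) (snd w)) \<partial>(Xmeas p \<Otimes>\<^sub>M \<nu>)) = 1"
    and zsub: "z \<subseteq> {..<p}"
  shows "(\<lambda>w. joint_z p f z (fst w) (snd w)) \<in> borel_measurable (XZYmeas z \<nu>)"
    and "marg_z p \<nu> f z \<in> borel_measurable (PiM z (\<lambda>_. lborel))"
    and "\<And>xz y. 0 \<le> joint_z p f z xz y"
    and "\<And>xz. 0 \<le> marg_z p \<nu> f z xz"
    and "(\<integral>\<^sup>+ w. ennreal (joint_z p f z (fst w) (snd w)) \<partial>XZYmeas z \<nu>) = 1"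
    and "AE xz in PiM z (\<lambda>_. lborel). ennreal (marg_z p \<nu> f z xz) = (\<integral>\<^sup>+ y. ennreal (joint_z p f z xz y) \<partial>\<nu>)"
proof -
  interpret nu: sigma_finite_measure \<nu> by fact
  define R where "R = {..<p} - z"
  have zR: "z \<union> R = {..<p}" "z \<inter> R = {}" using zsub by (auto simp: R_def)
  interpret PS: product_sigma_finite "\<lambda>_::nat. lborel :: real measure" by standard
  have fz: "finite z" "finite R" using zsub finite_subset by (auto simp: R_def)
  interpret PZ: sigma_finite_measure "PiM z (\<lambda>_. lborel :: real measure)" using PS.sigma_finite fz by blast
  interpret PR: sigma_finite_measure "PiM R (\<lambda>_. lborel :: real measure)" using PS.sigma_finite fz by blast
  interpret PRnu: pair_sigma_finite "PiM R (\<lambda>_. lborel :: real measure)" \<nu> by standard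
  interpret PZnu: pair_sigma_finite "PiM z (\<lambda>_. lborel :: real measure)" \<nu> by standard
  have XM: "Xmeas p = PiM (z \<union> R) (\<lambda>_. lborel)" unfolding Xmeas_def zR ..
  have mQ[measurable]: "(\<lambda>(w, x'). f (merge z R (fst w, x')) (snd w)) \<in> borel_measurable ((PiM z (\<lambda>_. lborel) \<Otimes>\<^sub>M \<nu>) \<Otimes>\<^sub>M PiM R (\<lambda>_. lborel))"
  proof -
    have "(\<lambda>(w, x'). (merge z R (fst w, x'), snd w)) \<in> measurable ((PiM z (\<lambda>_. lborel) \<Otimes>\<^sub>M \<nu>) \<Otimes>\<^sub>M PiM R (\<lambda>_. lborel)) (Xmeas p \<Otimes>\<^sub>M \<nu>)"
      unfolding XM by measurable
    from measurable_comp[OF this meas] show ?thesis by (simp add: comp_def case_prod_beta)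
  qed
  have jdef: "joint_z p f z xz y = (\<integral>x'. f (merge z R (xz, x')) y \<partial>PiM R (\<lambda>_. lborel))" for xz y
    unfolding joint_z_def R_def ..
  show mj[measurable]: "(\<lambda>w. joint_z p f z (fst w) (snd w)) \<in> borel_measurable (XZYmeas z \<nu>)"
    unfolding jdef XZYmeas_def
    using PR.borel_measurable_lebesgue_integral[OF mQ] by simp
  show mm: "marg_z p \<nu> f z \<in> borel_measurable (PiM z (\<lambda>_. lborel))"
    using nu.borel_measurable_lebesgue_integral[of "\<lambda>xz y. joint_z p f z xz y"] mj
    unfolding marg_z_def[abs_def] XZYmeas_def by (simp add: case_prod_beta')
  show jnn: "0 \<le> joint_z p f z xz y" for xz y
    unfolding jdef by (rule integral_nonneg_AE) (simp add: nonneg)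
  show "0 \<le> marg_z p \<nu> f z xz" for xz
    unfolding marg_z_def by (rule integral_nonneg_AE) (simp add: jnn)
  define J where "J w = (\<integral>\<^sup>+ x'. ennreal (f (merge z R (fst w, x')) (snd w)) \<partial>PiM R (\<lambda>_. lborel))" for w
  have mJ[measurable]: "J \<in> borel_measurable (PiM z (\<lambda>_. lborel) \<Otimes>\<^sub>M \<nu>)"
    unfolding J_def using mQ by measurable
  have "1 = (\<integral>\<^sup>+ x. \<integral>\<^sup>+ y. ennreal (f x y) \<partial>\<nu> \<partial>Xmeas p)"
    using nu.nn_integral_fst[of "\<lambda>w. ennreal (f (fst w) (snd w))" "Xmeas p"] tot by simp
  also have "\<dots> = (\<integral>\<^sup>+ xz. \<integral>\<^sup>+ x'. \<integral>\<^sup>+ y. ennreal (f (merge z R (xz, x')) y) \<partial>\<nu> \<partial>PiM R (\<lambda>_. lborel) \<partial>PiM z (\<lambda>_. lborel))"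
    unfolding XM by (rule PS.product_nn_integral_fold[OF zR(2) fz]) (use meas[unfolded XM] in measurable)
  also have "\<dots> = (\<integral>\<^sup>+ xz. \<integral>\<^sup>+ y. \<integral>\<^sup>+ x'. ennreal (f (merge z R (xz, x')) y) \<partial>PiM R (\<lambda>_. lborel) \<partial>\<nu> \<partial>PiM z (\<lambda>_. lborel))"
  proof (rule nn_integral_cong)
    fix xz assume xz: "xz \<in> space (PiM z (\<lambda>_. lborel :: real measure))"
    have "(\<lambda>(x', y). ennreal (f (merge z R (xz, x')) y)) \<in> borel_measurable (PiM R (\<lambda>_. lborel) \<Otimes>\<^sub>M \<nu>)"
    proof -
      have "(\<lambda>(x', y). ((xz, y), x')) \<in> measurable (PiM R (\<lambda>_. lborel) \<Otimes>\<^sub>M \<nu>) ((PiM z (\<lambda>_. lborel) \<Otimes>\<^sub>M \<nu>) \<Otimes>\<^sub>M PiM R (\<lambda>_. lborel))"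
        using xz by measurable
      from measurable_comp[OF this mQ] show ?thesis by (simp add: comp_def case_prod_beta)
    qed
    then show "(\<integral>\<^sup>+ x'. \<integral>\<^sup>+ y. ennreal (f (merge z R (xz, x')) y) \<partial>\<nu> \<partial>PiM R (\<lambda>_. lborel)) =
       (\<integral>\<^sup>+ y. \<integral>\<^sup>+ x'. ennreal (f (merge z R (xz, x')) y) \<partial>PiM R (\<lambda>_. lborel) \<partial>\<nu>)"
      by (rule PRnu.Fubini'[symmetric])
  qed
  also have "\<dots> = (\<integral>\<^sup>+ xz. \<integral>\<^sup>+ y. J (xz, y) \<partial>\<nu> \<partial>PiM z (\<lambda>_. lborel))"
    by (simp add: J_def)
  also have "\<dots> = (\<integral>\<^sup>+ w. J w \<partial>(PiM z (\<lambda>_. lborel) \<Otimes>\<^sub>M \<nu>))"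
    by (rule nu.nn_integral_fst[OF mJ])
  finally have totJ: "(\<integral>\<^sup>+ w. J w \<partial>(PiM z (\<lambda>_. lborel) \<Otimes>\<^sub>M \<nu>)) = 1" ..
  have aeJ: "AE w in PiM z (\<lambda>_. lborel) \<Otimes>\<^sub>M \<nu>. J w \<noteq> \<infinity>"
    by (rule nn_integral_PInf_AE) (use totJ in auto)
  have eqJ: "AE w in PiM z (\<lambda>_. lborel) \<Otimes>\<^sub>M \<nu>. ennreal (joint_z p f z (fst w) (snd w)) = J w"
    using aeJ AE_space
  proof eventually_elim
    case (elim w)
    note wsp = elim(2)
    have "integrable (PiM R (\<lambda>_. lborel)) (\<lambda>x'. f (merge z R (fst w, x')) (snd w))"
    proof (rule integrableI_bounded)
      have "(\<lambda>(ww, x'). f (merge z R (fst ww, x')) (snd ww)) \<in> borel_measurable ((PiM z (\<lambda>_. lborel) \<Otimes>\<^sub>M \<nu>) \<Otimes>\<^sub>M PiM R (\<lambda>_. lborel))" by (rule mQ)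
      from measurable_compose_Pair1[OF wsp this]
      show "(\<lambda>x'. f (merge z R (fst w, x')) (snd w)) \<in> borel_measurable (PiM R (\<lambda>_. lborel))"
        by simp
      show "(\<integral>\<^sup>+ x'. ennreal (norm (f (merge z R (fst w, x')) (snd w))) \<partial>PiM R (\<lambda>_. lborel)) < \<infinity>"
        using elim(1) nonneg by (simp add: J_def top.not_eq_extremum)
    qed
    then show ?case unfolding jdef J_def
      by (subst nn_integral_eq_integral) (auto simp: nonneg)
  qed
  show "(\<integral>\<^sup>+ w. ennreal (joint_z p f z (fst w) (snd w)) \<partial>XZYmeas z \<nu>) = 1"
    unfolding XZYmeas_def using totJ eqJ by (simp cong: nn_integral_cong_AE)
  show "AE xz in PiM z (\<lambda>_. lborel). ennreal (marg_z p \<nu> f z xz) = (\<integral>\<^sup>+ y. ennreal (joint_z p f z xz y) \<partial>\<nu>)"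
  proof -
    have a1: "AE xz in PiM z (\<lambda>_. lborel). AE y in \<nu>. ennreal (joint_z p f z (fst (xz,y)) (snd (xz,y))) = J (xz, y)"
      by (rule PZnu.AE_pair[OF eqJ])
    have a2: "AE xz in PiM z (\<lambda>_. lborel). (\<integral>\<^sup>+ y. J (xz, y) \<partial>\<nu>) \<noteq> \<infinity>"
      by (rule nn_integral_PInf_AE) (use nu.nn_integral_fst[OF mJ] totJ nu.borel_measurable_nn_integral_fst[OF mJ] in auto)
    show ?thesis using a1 a2 AE_space
    proof eventually_elim
      case (elim xz)
      have e: "(\<integral>\<^sup>+ y. ennreal (joint_z p f z xz y) \<partial>\<nu>) = (\<integral>\<^sup>+ y. J (xz, y) \<partial>\<nu>)"
        using elim(1) by (auto intro: nn_integral_cong_AE)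
      have mjx: "(\<lambda>y. joint_z p f z xz y) \<in> borel_measurable \<nu>"
        using measurable_compose_Pair1[OF elim(3) mj[unfolded XZYmeas_def]] by simp
      have "integrable \<nu> (\<lambda>y. joint_z p f z xz y)"
        by (rule integrableI_bounded) (use mjx e elim(2) jnn in \<open>auto simp: top.not_eq_extremum\<close>)
      then show ?case unfolding marg_z_def
        by (subst nn_integral_eq_integral) (auto simp: jnn)
    qed
  qed
qed
lemma gibbs:
  fixes A :: "'a measure" and B :: "'b measure" and I :: "nat set" and e :: nat
    and F :: "nat \<Rightarrow> 'a \<Rightarrow> 'b \<Rightarrow> real" and m :: "nat \<Rightarrow> 'a \<Rightarrow> real"
  assumes sA: "sigma_finite_measure A" and sB: "sigma_finite_measure B"
    and finI: "finite I" and eI: "e \<in> I"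
    and mF[measurable]: "\<And>e'. e' \<in> I \<Longrightarrow> (\<lambda>w. F e' (fst w) (snd w)) \<in> borel_measurable (A \<Otimes>\<^sub>M B)"
    and mm[measurable]: "\<And>e'. e' \<in> I \<Longrightarrow> m e' \<in> borel_measurable A"
    and Fnn: "\<And>e' x y. e' \<in> I \<Longrightarrow> 0 \<le> F e' x y"
    and mnn: "\<And>e' x. e' \<in> I \<Longrightarrow> 0 \<le> m e' x"
    and tot: "(\<integral>\<^sup>+ w. ennreal (F e (fst w) (snd w)) \<partial>(A \<Otimes>\<^sub>M B)) = 1"
    and margeq: "\<And>e'. e' \<in> I \<Longrightarrow> AE x in A. ennreal (m e' x) = (\<integral>\<^sup>+ y. ennreal (F e' x y) \<partial>B)"
    and int_c: "integrable (density (A \<Otimes>\<^sub>M B) (\<lambda>w. ennreal (F e (fst w) (snd w))))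
                   (\<lambda>w. ln (F e (fst w) (snd w) / m e (fst w)))"
    and int_g: "integrable (density (A \<Otimes>\<^sub>M B) (\<lambda>w. ennreal (F e (fst w) (snd w))))
                   (\<lambda>w. ln ((\<Sum>e'\<in>I. F e' (fst w) (snd w)) / (\<Sum>e'\<in>I. m e' (fst w))))"
  defines "T \<equiv> (\<integral>w. ln ((\<Sum>e'\<in>I. F e' (fst w) (snd w)) / (\<Sum>e'\<in>I. m e' (fst w)))
                  \<partial>density (A \<Otimes>\<^sub>M B) (\<lambda>w. ennreal (F e (fst w) (snd w))))
             - (\<integral>w. ln (F e (fst w) (snd w) / m e (fst w)) \<partial>density (A \<Otimes>\<^sub>M B) (\<lambda>w. ennreal (F e (fst w) (snd w))))"
  shows "T \<le> 0 \<and> (T = 0 \<longleftrightarrow> (AE w in A \<Otimes>\<^sub>M B. F e (fst w) (snd w) =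
            m e (fst w) * ((\<Sum>e'\<in>I. F e' (fst w) (snd w)) / (\<Sum>e'\<in>I. m e' (fst w)))))"
proof -
  interpret A: sigma_finite_measure A by fact
  interpret B: sigma_finite_measure B by fact
  interpret AB: pair_sigma_finite A B by standard
  let ?N = "A \<Otimes>\<^sub>M B"
  define f where "f w = F e (fst w) (snd w)" for w
  define g where "g x y = (\<Sum>e'\<in>I. F e' x y) / (\<Sum>e'\<in>I. m e' x)" for x y
  define h where "h w = m e (fst w) * g (fst w) (snd w)" for w
  define D where "D w = h w / f w" for w
  define \<mu> where "\<mu> = density ?N (\<lambda>w. ennreal (f w))"
  have mf[measurable]: "f \<in> borel_measurable ?N" unfolding f_def using mF[OF eI] .
  have mg[measurable]: "(\<lambda>w. g (fst w) (snd w)) \<in> borel_measurable ?N"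
    unfolding g_def using mF mm by (measurable; auto)
  have mh[measurable]: "h \<in> borel_measurable ?N" unfolding h_def using mm[OF eI] by measurable
  have mD[measurable]: "D \<in> borel_measurable ?N" unfolding D_def by measurable
  have tot': "(\<integral>\<^sup>+ w. ennreal (f w) \<partial>?N) = 1" using tot by (simp add: f_def)
  have fnn: "0 \<le> f w" for w unfolding f_def using Fnn eI by auto
  have gnn: "0 \<le> g x y" for x y unfolding g_def using Fnn mnn by (auto intro!: divide_nonneg_nonneg sum_nonneg)
  have hnn: "0 \<le> h w" for w unfolding h_def using gnn mnn eI by auto
  have Dnn: "0 \<le> D w" for w unfolding D_def using hnn fnn by auto
  have sp\<mu>: "space \<mu> = space ?N" "sets \<mu> = sets ?N" unfolding \<mu>_def by auto
  have prob: "prob_space \<mu>"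
  proof
    show "emeasure \<mu> (space \<mu>) = 1"
    proof -
      have "(\<integral>\<^sup>+ x. ennreal (f x) * indicator (space ?N) x \<partial>?N) = (\<integral>\<^sup>+ x. ennreal (f x) \<partial>?N)"
        by (rule nn_integral_cong) auto
      then show ?thesis
        using tot' emeasure_density[of "\<lambda>w. ennreal (f w)" ?N "space ?N"] by (simp add: \<mu>_def)
    qed
  qed
  interpret P: prob_space \<mu> by fact
  have mD\<mu>[measurable]: "D \<in> borel_measurable \<mu>" unfolding \<mu>_def using mD by simp
  have sumpos: "0 < (\<Sum>e'\<in>I. u e')" if "0 < u e" "\<And>e'. e' \<in> I \<Longrightarrow> 0 \<le> u e'" for u :: "nat \<Rightarrow> real"
  proof -
    have "(\<Sum>e'\<in>I. u e') = u e + (\<Sum>e'\<in>I - {e}. u e')" by (rule sum.remove[OF finI eI])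
    moreover have "0 \<le> (\<Sum>e'\<in>I - {e}. u e')" using that(2) by (auto intro: sum_nonneg)
    ultimately show ?thesis using that(1) by linarith
  qed
  have S1: "AE w in ?N. 0 < f w \<longrightarrow> 0 < m e (fst w)"
  proof -
    have "AE x in A. AE y in B. 0 < F e x y \<longrightarrow> 0 < m e x"
      using margeq[OF eI] AE_space
    proof eventually_elim
      case (elim x)
      show ?case
      proof (cases "m e x = 0")
        case True
        have mx: "(\<lambda>y. ennreal (F e x y)) \<in> borel_measurable B"
          using measurable_compose_Pair1[OF elim(2) mF[OF eI]] by simp
        have "(\<integral>\<^sup>+ y. ennreal (F e x y) \<partial>B) = 0" using elim(1) True by simp
        then have "AE y in B. ennreal (F e x y) = 0" using nn_integral_0_iff_AE[OF mx] by simp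
        then show ?thesis by eventually_elim (simp add: ennreal_eq_0_iff)
      next
        case False then show ?thesis using mnn[OF eI, of x] by simp
      qed
    qed
    then show ?thesis unfolding f_def
      by (subst AB.AE_pair_iff[symmetric]) (use mF[OF eI] mm[OF eI] in measurable)
  qed
  have S2: "AE w in \<mu>. 0 < f w \<and> 0 < m e (fst w) \<and> 0 < h w \<and> 0 < D w \<and>
     ln (g (fst w) (snd w)) - ln (F e (fst w) (snd w) / m e (fst w)) = ln (D w)"
    unfolding \<mu>_def
  proof (subst AE_density)
    show "AE w in ?N. 0 < ennreal (f w) \<longrightarrow> 0 < f w \<and> 0 < m e (fst w) \<and> 0 < h w \<and> 0 < D w \<and>
     ln (g (fst w) (snd w)) - ln (F e (fst w) (snd w) / m e (fst w)) = ln (D w)"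
      using S1
    proof eventually_elim
      case (elim w)
      show ?case
      proof
        assume "0 < ennreal (f w)"
        then have fp: "0 < f w" by simp
        with elim have mp: "0 < m e (fst w)" by simp
        have smp: "0 < (\<Sum>e'\<in>I. m e' (fst w))" by (rule sumpos) (use mp mnn in auto)
        have sFp: "0 < (\<Sum>e'\<in>I. F e' (fst w) (snd w))" by (rule sumpos) (use fp Fnn in \<open>auto simp: f_def\<close>)
        have gp: "0 < g (fst w) (snd w)" unfolding g_def using smp sFp by simp
        have hp: "0 < h w" unfolding h_def using gp mp by simp
        have cp: "0 < F e (fst w) (snd w) / m e (fst w)" using fp mp by (simp add: f_def)
        have "ln (g (fst w) (snd w)) - ln (F e (fst w) (snd w) / m e (fst w))
            = ln (g (fst w) (snd w) / (F e (fst w) (snd w) / m e (fst w)))"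
          using gp cp by (subst (2) ln_div) auto
        also have "g (fst w) (snd w) / (F e (fst w) (snd w) / m e (fst w)) = D w"
          unfolding D_def h_def f_def using fp mp by (simp add: f_def field_simps)
        finally show "0 < f w \<and> 0 < m e (fst w) \<and> 0 < h w \<and> 0 < D w \<and>
          ln (g (fst w) (snd w)) - ln (F e (fst w) (snd w) / m e (fst w)) = ln (D w)"
          using fp mp hp by (simp add: D_def)
      qed
    qed
  qed measurable
  have Teq: "T = (\<integral>w. ln (g (fst w) (snd w)) \<partial>\<mu>) - (\<integral>w. ln (F e (fst w) (snd w) / m e (fst w)) \<partial>\<mu>)"
    unfolding T_def \<mu>_def f_def g_def ..
  have ig: "integrable \<mu> (\<lambda>w. ln (g (fst w) (snd w)))" using int_g unfolding \<mu>_def f_def g_def .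
  have ic: "integrable \<mu> (\<lambda>w. ln (F e (fst w) (snd w) / m e (fst w)))" using int_c unfolding \<mu>_def f_def .
  have intlnD: "integrable \<mu> (\<lambda>w. ln (D w))"
  proof (rule integrable_cong_AE[THEN iffD1, OF _ _ _ Bochner_Integration.integrable_diff[OF ig ic]])
    show "(\<lambda>w. ln (g (fst w) (snd w)) - ln (F e (fst w) (snd w) / m e (fst w))) \<in> borel_measurable \<mu>"
      using Bochner_Integration.integrable_diff[OF ig ic] by (rule borel_measurable_integrable)
    show "(\<lambda>w. ln (D w)) \<in> borel_measurable \<mu>" by measurable
  qed (use S2 in \<open>auto elim: AE_mp\<close>)
  have T_lnD: "T = (\<integral>w. ln (D w) \<partial>\<mu>)"
    unfolding Teq Bochner_Integration.integral_diff[OF ig ic, symmetric]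
    by (rule integral_cong_AE) (use S2 borel_measurable_integrable[OF Bochner_Integration.integrable_diff[OF ig ic]] in \<open>auto elim: AE_mp\<close>)
  have margall: "AE x in A. \<forall>e'\<in>I. ennreal (m e' x) = (\<integral>\<^sup>+ y. ennreal (F e' x y) \<partial>B)"
    by (rule AE_finite_allI[OF finI]) (rule margeq)
  have hint: "(\<integral>\<^sup>+ w. ennreal (h w) \<partial>?N) \<le> 1"
  proof -
    have "(\<integral>\<^sup>+ w. ennreal (h w) \<partial>?N) = (\<integral>\<^sup>+ x. \<integral>\<^sup>+ y. ennreal (h (x, y)) \<partial>B \<partial>A)"
      by (rule B.nn_integral_fst[symmetric]) measurable
    also have "\<dots> \<le> (\<integral>\<^sup>+ x. ennreal (m e x) \<partial>A)"
    proof (rule nn_integral_mono_AE)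
      show "AE x in A. (\<integral>\<^sup>+ y. ennreal (h (x, y)) \<partial>B) \<le> ennreal (m e x)"
        using margall AE_space
      proof eventually_elim
        case (elim x)
        have mFx[measurable]: "(\<lambda>y. F e' x y) \<in> borel_measurable B" if "e' \<in> I" for e'
          using measurable_compose_Pair1[OF elim(2) mF[OF that]] by simp
        have mgx: "(\<lambda>y. g x y) \<in> borel_measurable B"
          using measurable_compose_Pair1[OF elim(2) mg] by simp
        have "(\<integral>\<^sup>+ y. ennreal (h (x, y)) \<partial>B) = (\<integral>\<^sup>+ y. ennreal (m e x) * ennreal (g x y) \<partial>B)"
          unfolding h_def using mnn[OF eI] gnn by (intro nn_integral_cong) (simp add: ennreal_mult)
        also have "\<dots> = ennreal (m e x) * (\<integral>\<^sup>+ y. ennreal (g x y) \<partial>B)"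
          by (rule nn_integral_cmult) (use mgx in measurable)
        also have "\<dots> \<le> ennreal (m e x)"
        proof (cases "m e x = 0")
          case True then show ?thesis by simp
        next
          case False
          then have mp: "0 < m e x" using mnn[OF eI, of x] by simp
          have smp: "0 < (\<Sum>e'\<in>I. m e' x)" by (rule sumpos) (use mp mnn in auto)
          have "(\<integral>\<^sup>+ y. ennreal (g x y) \<partial>B)
              = (\<integral>\<^sup>+ y. (\<Sum>e'\<in>I. ennreal (F e' x y)) * ennreal (1 / (\<Sum>e'\<in>I. m e' x)) \<partial>B)"
            unfolding g_def using Fnn smp
            by (intro nn_integral_cong) (simp add: ennreal_mult[symmetric] sum_nonneg)
          also have "\<dots> = (\<integral>\<^sup>+ y. (\<Sum>e'\<in>I. ennreal (F e' x y)) \<partial>B) * ennreal (1 / (\<Sum>e'\<in>I. m e' x))"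
            by (rule nn_integral_multc) (use mFx in measurable)
          also have "(\<integral>\<^sup>+ y. (\<Sum>e'\<in>I. ennreal (F e' x y)) \<partial>B) = (\<Sum>e'\<in>I. \<integral>\<^sup>+ y. ennreal (F e' x y) \<partial>B)"
            by (rule nn_integral_sum) (use mFx in measurable)
          also have "\<dots> = (\<Sum>e'\<in>I. ennreal (m e' x))" using elim(1) by simp
          also have "\<dots> = ennreal (\<Sum>e'\<in>I. m e' x)" using mnn by simp
          finally have "(\<integral>\<^sup>+ y. ennreal (g x y) \<partial>B) = 1"
            using smp by (simp add: ennreal_mult[symmetric])
          then show ?thesis by simp
        qed
        finally show ?case .
      qed
    qed
    also have "\<dots> = (\<integral>\<^sup>+ x. \<integral>\<^sup>+ y. ennreal (F e x y) \<partial>B \<partial>A)"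
      by (rule nn_integral_cong_AE) (use margeq[OF eI] in auto)
    also have "\<dots> = (\<integral>\<^sup>+ w. ennreal (f w) \<partial>?N)"
      unfolding f_def using B.nn_integral_fst[of "\<lambda>w. ennreal (F e (fst w) (snd w))" A] mF[OF eI] by simp
    finally show ?thesis using tot' by simp
  qed
  have fDh: "ennreal (f w) * ennreal (D w) \<le> ennreal (h w)" for w
    using fnn hnn by (simp add: ennreal_mult[symmetric] D_def)
  have Dnn_int: "(\<integral>\<^sup>+ w. ennreal (D w) \<partial>\<mu>) = (\<integral>\<^sup>+ w. ennreal (f w) * ennreal (D w) \<partial>?N)"
    unfolding \<mu>_def by (rule nn_integral_density) measurable
  have Dint1: "(\<integral>\<^sup>+ w. ennreal (D w) \<partial>\<mu>) \<le> 1"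
    unfolding Dnn_int using nn_integral_mono[of ?N, OF fDh] hint by (meson order_trans)
  have intD: "integrable \<mu> D"
    by (rule integrableI_bounded) (use Dint1 Dnn in \<open>auto simp: top.not_eq_extremum intro: le_less_trans\<close>)
  have Deq: "ennreal (\<integral>w. D w \<partial>\<mu>) = (\<integral>\<^sup>+ w. ennreal (D w) \<partial>\<mu>)"
    by (rule nn_integral_eq_integral[symmetric]) (use intD Dnn in auto)
  have intD1: "(\<integral>w. D w \<partial>\<mu>) \<le> 1"
    using Deq Dint1 by (metis ennreal_le_1)
  have lnle: "AE w in \<mu>. ln (D w) \<le> D w - 1"
    using S2 by eventually_elim (simp add: ln_le_minus_one)
  have int1: "integrable \<mu> (\<lambda>w. D w - 1)" using intD by simp
  have intDm1: "(\<integral>w. D w - 1 \<partial>\<mu>) = (\<integral>w. D w \<partial>\<mu>) - 1"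
    using intD by (simp add: Bochner_Integration.integral_diff P.prob_space)
  have Tle: "T \<le> (\<integral>w. D w \<partial>\<mu>) - 1"
    unfolding T_lnD intDm1[symmetric] by (rule integral_mono_AE[OF intlnD int1 lnle])
  have Tle0: "T \<le> 0" using Tle intD1 by linarith
  have concl_eq: "(AE w in ?N. F e (fst w) (snd w) = m e (fst w) * ((\<Sum>e'\<in>I. F e' (fst w) (snd w)) / (\<Sum>e'\<in>I. m e' (fst w))))
      \<longleftrightarrow> (AE w in ?N. f w = h w)"
    unfolding f_def h_def g_def ..
  have "T = 0 \<longleftrightarrow> (AE w in ?N. f w = h w)"
  proof
    assume ae: "AE w in ?N. f w = h w"
    have "AE w in \<mu>. f w = h w"
      unfolding \<mu>_def by (subst AE_density) (use ae in \<open>auto elim: AE_mp\<close>)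
    with S2 have "AE w in \<mu>. ln (D w) = 0"
      by eventually_elim (simp add: D_def)
    then have "(\<integral>w. ln (D w) \<partial>\<mu>) = (\<integral>w. 0 \<partial>\<mu>)"
      by (intro integral_cong_AE) auto
    then show "T = 0" unfolding T_lnD by simp
  next
    assume T0: "T = 0"
    define \<phi> where "\<phi> w = D w - 1 - ln (D w)" for w
    have iphi: "integrable \<mu> \<phi>" unfolding \<phi>_def using int1 intlnD by simp
    have phinn: "AE w in \<mu>. 0 \<le> \<phi> w" using lnle unfolding \<phi>_def by eventually_elim simp
    have "(\<integral>w. \<phi> w \<partial>\<mu>) = (\<integral>w. D w - 1 \<partial>\<mu>) - (\<integral>w. ln (D w) \<partial>\<mu>)"
      unfolding \<phi>_def using int1 intlnD by (simp add: Bochner_Integration.integral_diff)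
    also have "\<dots> = (\<integral>w. D w \<partial>\<mu>) - 1" using T0 T_lnD intDm1 by simp
    finally have phieq: "(\<integral>w. \<phi> w \<partial>\<mu>) = (\<integral>w. D w \<partial>\<mu>) - 1" .
    have "0 \<le> (\<integral>w. \<phi> w \<partial>\<mu>)" by (rule integral_nonneg_AE[OF phinn])
    then have phi0: "(\<integral>w. \<phi> w \<partial>\<mu>) = 0" and intD_1: "(\<integral>w. D w \<partial>\<mu>) = 1"
      using phieq intD1 by linarith+
    have "AE w in \<mu>. \<phi> w = 0" using integral_nonneg_eq_0_iff_AE[OF iphi phinn] phi0 by simp
    with S2 have D1: "AE w in \<mu>. D w = 1"
    proof eventually_elim
      case (elim w)
      then have "ln (D w) = D w - 1" unfolding \<phi>_def by simp
      then show ?case using ln_eq_minus_one elim by blast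
    qed
    have pos_part: "AE w in ?N. 0 < f w \<longrightarrow> h w = f w"
    proof -
      have "AE w in ?N. 0 < ennreal (f w) \<longrightarrow> D w = 1"
        using D1 unfolding \<mu>_def by (subst (asm) AE_density) auto
      then show ?thesis
      proof eventually_elim
        case (elim w)
        then show ?case unfolding D_def by (auto simp: divide_eq_1_iff)
      qed
    qed
    define k where "k w = (if f w = 0 then h w else 0)" for w
    have mk[measurable]: "k \<in> borel_measurable ?N" unfolding k_def by measurable
    have hsplit: "ennreal (h w) = ennreal (f w) * ennreal (D w) + ennreal (k w)" for w
    proof (cases "f w = 0")
      case True then show ?thesis by (simp add: k_def)
    next
      case False
      then have "f w * D w = h w" unfolding D_def by simp
      then show ?thesis using False fnn Dnn by (simp add: k_def ennreal_mult[symmetric])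
    qed
    have "(\<integral>\<^sup>+ w. ennreal (h w) \<partial>?N) = (\<integral>\<^sup>+ w. ennreal (f w) * ennreal (D w) \<partial>?N) + (\<integral>\<^sup>+ w. ennreal (k w) \<partial>?N)"
      unfolding hsplit by (rule nn_integral_add) measurable
    also have "(\<integral>\<^sup>+ w. ennreal (f w) * ennreal (D w) \<partial>?N) = 1"
      using Dnn_int Deq intD_1 by simp
    finally have "1 + (\<integral>\<^sup>+ w. ennreal (k w) \<partial>?N) \<le> 1" using hint by simp
    then have "(\<integral>\<^sup>+ w. ennreal (k w) \<partial>?N) = 0"
      using ennreal_add_left_cancel_le[of 1 "\<integral>\<^sup>+ w. ennreal (k w) \<partial>?N" 0] by simp
    then have "AE w in ?N. ennreal (k w) = 0" by (subst (asm) nn_integral_0_iff_AE) measurable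
    with pos_part show "AE w in ?N. f w = h w"
    proof eventually_elim
      case (elim w)
      then show ?case using fnn[of w] hnn[of w] by (cases "f w = 0") (auto simp: k_def)
    qed
  qed
  then show ?thesis using Tle0 concl_eq by simp
qed
lemma measurable_elog[measurable]: "elog \<in> borel_measurable borel"
  unfolding elog_def[abs_def] by measurable

lemma elog_neq_PInf[simp]: "elog x \<noteq> \<infinity>"
  by (simp add: elog_def)

lemma ereal_sum_MInf:
  fixes f :: "'i \<Rightarrow> ereal"
  assumes "finite A" "i \<in> A" "f i = -\<infinity>" "\<And>j. j \<in> A \<Longrightarrow> f j \<noteq> \<infinity>"
  shows "sum f A = -\<infinity>"
proof -
  have "sum f A = f i + sum f (A - {i})" by (rule sum.remove[OF assms(1,2)])
  moreover have "sum f (A - {i}) \<noteq> \<infinity>" using assms by (auto simp: sum_Pinfty)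
  ultimately show ?thesis using assms(3) by simp
qed

lemma elog_avg:
  fixes x :: "nat \<Rightarrow> nat \<Rightarrow> real" and n E :: nat and c \<epsilon> :: real
  assumes n: "n \<ge> 1" and E: "E \<ge> 1"
    and nb: "\<not> (ereal \<epsilon> < \<bar>ereal (1 / (real n * real E)) * (\<Sum>i<n. \<Sum>e<E. elog (x i e)) - ereal c\<bar>)"
  shows "(\<forall>i<n. \<forall>e<E. 0 < x i e) \<and> \<bar>(\<Sum>i<n. \<Sum>e<E. ln (x i e)) / (real n * real E) - c\<bar> \<le> \<epsilon>"
proof (cases "\<exists>i<n. \<exists>e<E. x i e \<le> 0")
  case True
  then obtain i e where ie: "i < n" "e < E" "x i e \<le> 0" by auto
  have inner: "(\<Sum>e<E. elog (x i e)) = -\<infinity>"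
    by (rule ereal_sum_MInf[of _ e]) (use ie in \<open>auto simp: elog_def\<close>)
  have "(\<Sum>i<n. \<Sum>e<E. elog (x i e)) = -\<infinity>"
    by (rule ereal_sum_MInf[of "{..<n}" i "\<lambda>i. \<Sum>e<E. elog (x i e)"]) (use ie inner in \<open>auto simp: sum_Pinfty\<close>)
  moreover have "0 < 1 / (real n * real E)" using n E by simp
  ultimately have "ereal (1 / (real n * real E)) * (\<Sum>i<n. \<Sum>e<E. elog (x i e)) = -\<infinity>" using n E by simp
  then have "\<bar>ereal (1 / (real n * real E)) * (\<Sum>i<n. \<Sum>e<E. elog (x i e)) - ereal c\<bar> = \<infinity>"
    by (simp only:) simp
  then show ?thesis using nb by simp
next
  case False
  then have pos: "\<forall>i<n. \<forall>e<E. 0 < x i e" by force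
  then have "(\<Sum>i<n. \<Sum>e<E. elog (x i e)) = ereal (\<Sum>i<n. \<Sum>e<E. ln (x i e))"
    by (simp add: elog_def)
  with nb have "\<not> \<epsilon> < \<bar>(1 / (real n * real E)) * (\<Sum>i<n. \<Sum>e<E. ln (x i e)) - c\<bar>" by simp
  then show ?thesis using pos by simp
qed

lemma prod_ratio_exp:
  fixes a b :: "nat \<Rightarrow> nat \<Rightarrow> real"
  assumes "\<forall>i<n. \<forall>e<E. 0 < a e i" "\<forall>i<n. \<forall>e<E. 0 < b e i"
  shows "(\<Prod>e<E. \<Prod>i<n. a e i / b e i) =
         exp ((\<Sum>i<n. \<Sum>e<E. ln (a e i)) - (\<Sum>i<n. \<Sum>e<E. ln (b e i)))"
proof -
  have "(\<Prod>e<E. \<Prod>i<n. a e i / b e i) = (\<Prod>e<E. \<Prod>i<n. exp (ln (a e i) - ln (b e i)))"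
    using assms by (intro prod.cong refl) (simp add: exp_diff)
  also have "\<dots> = exp (\<Sum>e<E. \<Sum>i<n. (ln (a e i) - ln (b e i)))"
    by (simp add: exp_sum)
  also have "(\<Sum>e<E. \<Sum>i<n. (ln (a e i) - ln (b e i))) = (\<Sum>i<n. \<Sum>e<E. ln (a e i)) - (\<Sum>i<n. \<Sum>e<E. ln (b e i))"
    by (simp add: sum_subtractf sum.swap[of _ "{..<E}"])
  finally show ?thesis .
qed

lemma det_bound:
  fixes E n :: nat and Zs :: "nat set set" and prior :: "nat set \<Rightarrow> real" and zs :: "nat set"
    and a b :: "nat set \<Rightarrow> nat \<Rightarrow> nat \<Rightarrow> real" and ca cb :: "nat set \<Rightarrow> real" and \<delta> :: real
  assumes n: "n \<ge> 1" and E: "E \<ge> 1" and zs: "zs \<in> Zs" and ppos: "prior zs > 0"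
    and pnn: "\<And>z. z \<in> Zs \<Longrightarrow> 0 \<le> prior z" and \<delta>: "\<delta> > 0"
    and gap: "\<And>z. z \<in> Zs \<Longrightarrow> prior z > 0 \<Longrightarrow> z \<noteq> zs \<Longrightarrow> ca z - cb z \<le> ca zs - cb zs - \<delta>"
    and good: "\<And>z. z \<in> Zs \<Longrightarrow> prior z > 0 \<Longrightarrow>
        \<not> (ereal (\<delta>/8) < \<bar>ereal (1 / (real n * real E)) * (\<Sum>i<n. \<Sum>e<E. elog (a z e i)) - ereal (ca z)\<bar>) \<and>
        \<not> (ereal (\<delta>/8) < \<bar>ereal (1 / (real n * real E)) * (\<Sum>i<n. \<Sum>e<E. elog (b z e i)) - ereal (cb z)\<bar>)"
  defines "W \<equiv> \<lambda>z. prior z * (\<Prod>e<E. \<Prod>i<n. a z e i / b z e i)"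
  shows "0 < W zs \<and> (\<forall>z\<in>Zs. 0 \<le> W z) \<and>
         (\<forall>z\<in>Zs - {zs}. W z \<le> prior z / prior zs * exp (- real n * \<delta> / 2) * W zs)"
proof -
  define U where "U z = ((\<Sum>i<n. \<Sum>e<E. ln (a z e i)) - (\<Sum>i<n. \<Sum>e<E. ln (b z e i))) / (real n * real E)" for z
  have nE: "0 < real n * real E" using n E by simp
  have key: "W z = prior z * exp (real n * real E * U z) \<and> ca z - cb z - \<delta>/4 \<le> U z \<and> U z \<le> ca z - cb z + \<delta>/4"
    if z: "z \<in> Zs" "prior z > 0" for z
  proof -
    from good[OF z] have ga: "\<not> (ereal (\<delta>/8) < \<bar>ereal (1 / (real n * real E)) * (\<Sum>i<n. \<Sum>e<E. elog (a z e i)) - ereal (ca z)\<bar>)"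
      and gb: "\<not> (ereal (\<delta>/8) < \<bar>ereal (1 / (real n * real E)) * (\<Sum>i<n. \<Sum>e<E. elog (b z e i)) - ereal (cb z)\<bar>)" by auto
    from elog_avg[OF n E, of "\<delta>/8" "\<lambda>i e. a z e i" "ca z"] ga
    have pa: "\<forall>i<n. \<forall>e<E. 0 < a z e i" and ba: "\<bar>(\<Sum>i<n. \<Sum>e<E. ln (a z e i)) / (real n * real E) - ca z\<bar> \<le> \<delta>/8" by auto
    from elog_avg[OF n E, of "\<delta>/8" "\<lambda>i e. b z e i" "cb z"] gb
    have pb: "\<forall>i<n. \<forall>e<E. 0 < b z e i" and bb: "\<bar>(\<Sum>i<n. \<Sum>e<E. ln (b z e i)) / (real n * real E) - cb z\<bar> \<le> \<delta>/8" by auto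
    have "W z = prior z * exp ((\<Sum>i<n. \<Sum>e<E. ln (a z e i)) - (\<Sum>i<n. \<Sum>e<E. ln (b z e i)))"
      unfolding W_def using prod_ratio_exp[OF pa pb] by simp
    also have "(\<Sum>i<n. \<Sum>e<E. ln (a z e i)) - (\<Sum>i<n. \<Sum>e<E. ln (b z e i)) = real n * real E * U z"
      unfolding U_def using nE by simp
    finally have Weq: "W z = prior z * exp (real n * real E * U z)" .
    have Ueq: "U z = (\<Sum>i<n. \<Sum>e<E. ln (a z e i)) / (real n * real E) - (\<Sum>i<n. \<Sum>e<E. ln (b z e i)) / (real n * real E)"
      unfolding U_def by (simp add: diff_divide_distrib)
    have "ca z - cb z - \<delta>/4 \<le> U z" "U z \<le> ca z - cb z + \<delta>/4"
      using Ueq ba bb unfolding abs_le_iff by linarith+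
    then show ?thesis using Weq by simp
  qed
  have W0: "W z = 0" if "z \<in> Zs" "\<not> prior z > 0" for z
    using pnn[OF that(1)] that(2) unfolding W_def by simp
  have Wzs: "W zs = prior zs * exp (real n * real E * U zs)" and Uzs: "ca zs - cb zs - \<delta>/4 \<le> U zs"
    using key[OF zs ppos] by auto
  have Wpos: "0 < W zs" using Wzs ppos by simp
  have Wnn: "\<forall>z\<in>Zs. 0 \<le> W z"
  proof
    fix z assume z: "z \<in> Zs"
    show "0 \<le> W z"
    proof (cases "prior z > 0")
      case True then show ?thesis using key[OF z True] by simp
    qed (use W0 z in auto)
  qed
  have "W z \<le> prior z / prior zs * exp (- real n * \<delta> / 2) * W zs" if z: "z \<in> Zs - {zs}" for z
  proof (cases "prior z > 0")
    case False then show ?thesis using W0[of z] z pnn[of z] Wpos by auto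
  next
    case True
    have Wz: "W z = prior z * exp (real n * real E * U z)" and Uz: "U z \<le> ca z - cb z + \<delta>/4"
      using key[of z] z True by auto
    have "U z \<le> U zs - \<delta>/2" using gap[of z] z True Uz Uzs by auto
    then have "real n * real E * U z \<le> real n * real E * (U zs - \<delta>/2)"
      using nE by (intro mult_left_mono) auto
    also have "\<dots> = real n * real E * U zs - real n * real E * (\<delta>/2)"
      by (simp add: right_diff_distrib)
    also have "\<dots> \<le> real n * real E * U zs - real n * \<delta> / 2"
    proof -
      have "real n * \<delta> * 1 \<le> real n * \<delta> * real E"
        using E \<delta> by (intro mult_left_mono) auto
      then show ?thesis by (simp add: algebra_simps)
    qed
    finally have "exp (real n * real E * U z) \<le> exp (real n * real E * U zs - real n * \<delta> / 2)" by simp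
    also have "\<dots> = exp (- real n * \<delta> / 2) * exp (real n * real E * U zs)"
      by (subst exp_add[symmetric]) (simp add: algebra_simps)
    finally have "W z \<le> prior z * (exp (- real n * \<delta> / 2) * exp (real n * real E * U zs))"
      unfolding Wz using True by (simp add: mult_left_mono)
    also have "\<dots> = prior z / prior zs * exp (- real n * \<delta> / 2) * W zs"
      unfolding Wzs using ppos by simp
    finally show ?thesis .
  qed
  then show ?thesis using Wpos Wnn by auto
qed

lemma arg_max_strict:
  fixes f :: "'a \<Rightarrow> real"
  assumes "zs \<in> Zs" "\<And>z. z \<in> Zs \<Longrightarrow> z \<noteq> zs \<Longrightarrow> f z < f zs" "\<And>z. P z \<longleftrightarrow> z \<in> Zs"
  shows "arg_max f P = zs"
proof -
  have "is_arg_max f P zs" using assms unfolding is_arg_max_def by force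
  then have "is_arg_max f P (arg_max f P)" unfolding arg_max_def by (rule someI)
  then show ?thesis using assms unfolding is_arg_max_def by force
qed

lemma post_facts:
  fixes W c :: "'a \<Rightarrow> real"
  assumes fin: "finite Zs" and zs: "zs \<in> Zs" and Wpos: "0 < W zs" and Wnn: "\<forall>z\<in>Zs. 0 \<le> W z"
    and Wle: "\<forall>z\<in>Zs - {zs}. W z \<le> c z * r * W zs" and cnn: "\<forall>z\<in>Zs. 0 \<le> c z"
    and K: "(\<Sum>z\<in>Zs - {zs}. c z) \<le> K" and r: "0 \<le> r"
  shows "\<bar>W zs / (\<Sum>z\<in>Zs. W z) - 1\<bar> \<le> K * r"
    and "K * r < 1 \<Longrightarrow> \<forall>z\<in>Zs - {zs}. W z / (\<Sum>z\<in>Zs. W z) < W zs / (\<Sum>z\<in>Zs. W z)"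
proof -
  define S where "S = (\<Sum>z\<in>Zs. W z)"
  have S: "S = W zs + (\<Sum>z\<in>Zs - {zs}. W z)" unfolding S_def by (rule sum.remove[OF fin zs])
  have rest_nn: "0 \<le> (\<Sum>z\<in>Zs - {zs}. W z)" using Wnn by (auto intro: sum_nonneg)
  have "(\<Sum>z\<in>Zs - {zs}. W z) \<le> (\<Sum>z\<in>Zs - {zs}. c z * r * W zs)" using Wle by (intro sum_mono) auto
  also have "\<dots> = (\<Sum>z\<in>Zs - {zs}. c z) * (r * W zs)" by (simp add: sum_distrib_right mult.assoc)
  also have "\<dots> \<le> K * (r * W zs)" using K r Wpos by (intro mult_right_mono) auto
  finally have rest_le: "(\<Sum>z\<in>Zs - {zs}. W z) \<le> K * r * W zs" by (simp add: mult.assoc)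
  have Spos: "0 < S" using S rest_nn Wpos by linarith
  have e1: "W zs / S - 1 = - ((S - W zs) / S)" using Spos by (simp add: field_simps)
  have e2: "0 \<le> (S - W zs) / S" using S rest_nn Spos by simp
  have "\<bar>W zs / S - 1\<bar> = (S - W zs) / S" unfolding e1 abs_minus_cancel using e2 by (rule abs_of_nonneg)
  also have "\<dots> \<le> K * r * W zs / S" using rest_le S Spos by (intro divide_right_mono) auto
  also have "\<dots> \<le> K * r * W zs / W zs"
  proof (rule divide_left_mono)
    show "0 \<le> K * r * W zs" using rest_le rest_nn by linarith
  qed (use S rest_nn Wpos in auto)
  also have "\<dots> = K * r" using Wpos by simp
  finally show "\<bar>W zs / (\<Sum>z\<in>Zs. W z) - 1\<bar> \<le> K * r" unfolding S_def .
  assume Kr: "K * r < 1"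
  show "\<forall>z\<in>Zs - {zs}. W z / (\<Sum>z\<in>Zs. W z) < W zs / (\<Sum>z\<in>Zs. W z)"
  proof
    fix z assume z: "z \<in> Zs - {zs}"
    have cK: "c z \<le> K"
      using K member_le_sum[of z "Zs - {zs}" c] z cnn fin by force
    have "W z \<le> c z * r * W zs" using Wle z by auto
    also have "\<dots> \<le> K * r * W zs" using cK r Wpos by (intro mult_right_mono) auto
    also have "\<dots> < 1 * W zs" using Kr Wpos by (intro mult_strict_right_mono) auto
    finally have "W z < W zs" by simp
    then show "W z / (\<Sum>z\<in>Zs. W z) < W zs / (\<Sum>z\<in>Zs. W z)"
      using Spos unfolding S_def by (simp add: divide_strict_right_mono)
  qed
qed

lemma exp_neg_lim: "(0::real) < \<delta> \<Longrightarrow> (\<lambda>n. exp (- real n * \<delta> / 2)) \<longlonglongrightarrow> 0"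
proof -
  assume d: "0 < \<delta>"
  have eq: "exp (- real n * \<delta> / 2) = exp (- \<delta> / 2) ^ n" for n
    using exp_of_nat_mult[of n "- \<delta> / 2"] by (simp add: algebra_simps)
  have "norm (exp (- \<delta> / 2)) < 1" using d by simp
  from LIMSEQ_power_zero[OF this] show ?thesis unfolding eq .
qed

lemma bip_prob:
  fixes M :: "'w measure" and E :: nat and Zs :: "nat set set" and Pz :: "nat set \<Rightarrow> bool"
    and prior :: "nat set \<Rightarrow> real" and zs :: "nat set"
    and a b :: "nat \<Rightarrow> nat set \<Rightarrow> 'w \<Rightarrow> nat \<Rightarrow> nat \<Rightarrow> real" and ca cb :: "nat set \<Rightarrow> real"
  assumes M: "prob_space M" and E: "E \<ge> 1" and finZ: "finite Zs" and PZ: "\<And>z. Pz z \<longleftrightarrow> z \<in> Zs"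
    and zs: "zs \<in> Zs" and ppos: "prior zs > 0" and pnn: "\<And>z. z \<in> Zs \<Longrightarrow> 0 \<le> prior z"
    and ma: "\<And>n z e i. z \<in> Zs \<Longrightarrow> e < E \<Longrightarrow> (\<lambda>\<omega>. a n z \<omega> e i) \<in> borel_measurable M"
    and mb: "\<And>n z e i. z \<in> Zs \<Longrightarrow> e < E \<Longrightarrow> (\<lambda>\<omega>. b n z \<omega> e i) \<in> borel_measurable M"
    and cva: "\<And>z. z \<in> Zs \<Longrightarrow> prior z > 0 \<Longrightarrow>
       conv_in_prob M (\<lambda>n \<omega>. ereal (1 / (real n * real E)) * (\<Sum>i<n. \<Sum>e<E. elog (a n z \<omega> e i))) (ca z)"
    and cvb: "\<And>z. z \<in> Zs \<Longrightarrow> prior z > 0 \<Longrightarrow>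
       conv_in_prob M (\<lambda>n \<omega>. ereal (1 / (real n * real E)) * (\<Sum>i<n. \<Sum>e<E. elog (b n z \<omega> e i))) (cb z)"
    and gap: "\<And>z. z \<in> Zs \<Longrightarrow> prior z > 0 \<Longrightarrow> z \<noteq> zs \<Longrightarrow> ca z - cb z < ca zs - cb zs"
  defines "W \<equiv> \<lambda>n \<omega> z. prior z * (\<Prod>e<E. \<Prod>i<n. a n z \<omega> e i / b n z \<omega> e i)"
  shows "(\<lambda>n. measure M {\<omega> \<in> space M. arg_max (\<lambda>z. W n \<omega> z / (\<Sum>z'\<in>Zs. W n \<omega> z')) Pz \<noteq> zs}) \<longlonglongrightarrow> 0"
    and "conv_in_prob M (\<lambda>n \<omega>. ereal (W n \<omega> zs / (\<Sum>z'\<in>Zs. W n \<omega> z'))) 1"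
proof -
  interpret P: prob_space M by fact
  define Zp where "Zp = {z\<in>Zs. 0 < prior z}"
  have finZp: "finite Zp" using finZ unfolding Zp_def by simp
  define \<delta> where "\<delta> = Min (insert 1 ((\<lambda>z. (ca zs - cb zs) - (ca z - cb z)) ` (Zp - {zs})))"
  have \<delta>pos: "0 < \<delta>" unfolding \<delta>_def using finZp gap by (subst Min_gr_iff) (auto simp: Zp_def)
  have gap\<delta>: "ca z - cb z \<le> ca zs - cb zs - \<delta>" if "z \<in> Zs" "prior z > 0" "z \<noteq> zs" for z
  proof -
    have "\<delta> \<le> (ca zs - cb zs) - (ca z - cb z)" unfolding \<delta>_def
      using finZp that by (intro Min_le) (auto simp: Zp_def)
    then show ?thesis by simp
  qed
  define La where "La n z \<omega> = ereal (1 / (real n * real E)) * (\<Sum>i<n. \<Sum>e<E. elog (a n z \<omega> e i))" for n z \<omega>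
  define Lb where "Lb n z \<omega> = ereal (1 / (real n * real E)) * (\<Sum>i<n. \<Sum>e<E. elog (b n z \<omega> e i))" for n z \<omega>
  define Aa where "Aa n z = {\<omega> \<in> space M. ereal (\<delta>/8) < \<bar>La n z \<omega> - ereal (ca z)\<bar>}" for n z
  define Ab where "Ab n z = {\<omega> \<in> space M. ereal (\<delta>/8) < \<bar>Lb n z \<omega> - ereal (cb z)\<bar>}" for n z
  define Bad where "Bad n = (\<Union>z\<in>Zp. Aa n z \<union> Ab n z)" for n
  have mLa: "La n z \<in> borel_measurable M" if "z \<in> Zs" for n z
    unfolding La_def[abs_def] using ma[OF that] by measurable
  have mLb: "Lb n z \<in> borel_measurable M" if "z \<in> Zs" for n z
    unfolding Lb_def[abs_def] using mb[OF that] by measurable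
  have sAa: "Aa n z \<in> sets M" if "z \<in> Zs" for n z unfolding Aa_def using mLa[OF that] by measurable
  have sAb: "Ab n z \<in> sets M" if "z \<in> Zs" for n z unfolding Ab_def using mLb[OF that] by measurable
  have sBad: "Bad n \<in> sets M" for n unfolding Bad_def using sAa sAb finZp by (auto simp: Zp_def)
  have measBad: "(\<lambda>n. measure M (Bad n)) \<longlonglongrightarrow> 0"
  proof (rule tendsto_sandwich[of "\<lambda>_. 0" _ _ "\<lambda>n. \<Sum>z\<in>Zp. measure M (Aa n z) + measure M (Ab n z)"])
    show "\<forall>\<^sub>F n in sequentially. 0 \<le> measure M (Bad n)" by simp
    show "\<forall>\<^sub>F n in sequentially. measure M (Bad n) \<le> (\<Sum>z\<in>Zp. measure M (Aa n z) + measure M (Ab n z))"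
    proof (intro always_eventually allI)
      fix n
      have "measure M (Bad n) \<le> (\<Sum>z\<in>Zp. measure M (Aa n z \<union> Ab n z))"
        unfolding Bad_def by (rule P.finite_measure_subadditive_finite[OF finZp]) (use sAa sAb in \<open>auto simp: Zp_def\<close>)
      also have "\<dots> \<le> (\<Sum>z\<in>Zp. measure M (Aa n z) + measure M (Ab n z))"
        by (intro sum_mono measure_Un_le) (use sAa sAb in \<open>auto simp: Zp_def\<close>)
      finally show "measure M (Bad n) \<le> (\<Sum>z\<in>Zp. measure M (Aa n z) + measure M (Ab n z))" .
    qed
    have "(\<lambda>n. \<Sum>z\<in>Zp. measure M (Aa n z) + measure M (Ab n z)) \<longlonglongrightarrow> (\<Sum>z\<in>Zp. 0 + 0)"
    proof (intro tendsto_sum tendsto_add)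
      fix z assume z: "z \<in> Zp"
      have "\<delta>/8 > 0" using \<delta>pos by simp
      then show "(\<lambda>n. measure M (Aa n z)) \<longlonglongrightarrow> 0" "(\<lambda>n. measure M (Ab n z)) \<longlonglongrightarrow> 0"
        using cva[of z] cvb[of z] z unfolding conv_in_prob_def Aa_def Ab_def La_def Lb_def Zp_def by auto
    qed
    then show "(\<lambda>n. \<Sum>z\<in>Zp. measure M (Aa n z) + measure M (Ab n z)) \<longlonglongrightarrow> 0" by simp
  qed simp
  define K where "K = (\<Sum>z\<in>Zs. prior z) / prior zs"
  define r where "r n = exp (- real n * \<delta> / 2)" for n
  have Kr: "(\<lambda>n. K * r n) \<longlonglongrightarrow> 0"
    unfolding r_def using tendsto_mult_right_zero[OF exp_neg_lim[OF \<delta>pos], of K] by simp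
  have core: "\<bar>W n \<omega> zs / (\<Sum>z\<in>Zs. W n \<omega> z) - 1\<bar> \<le> K * r n \<and>
      (K * r n < 1 \<longrightarrow> arg_max (\<lambda>z. W n \<omega> z / (\<Sum>z'\<in>Zs. W n \<omega> z')) Pz = zs)"
    if n: "n \<ge> 1" and \<omega>: "\<omega> \<in> space M" "\<omega> \<notin> Bad n" for n \<omega>
  proof -
    have good: "\<not> (ereal (\<delta>/8) < \<bar>ereal (1 / (real n * real E)) * (\<Sum>i<n. \<Sum>e<E. elog (a n z \<omega> e i)) - ereal (ca z)\<bar>) \<and>
        \<not> (ereal (\<delta>/8) < \<bar>ereal (1 / (real n * real E)) * (\<Sum>i<n. \<Sum>e<E. elog (b n z \<omega> e i)) - ereal (cb z)\<bar>)"
      if "z \<in> Zs" "prior z > 0" for z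
      using \<omega> that unfolding Bad_def Aa_def Ab_def La_def Lb_def Zp_def by auto
    have D: "0 < W n \<omega> zs \<and> (\<forall>z\<in>Zs. 0 \<le> W n \<omega> z) \<and>
         (\<forall>z\<in>Zs - {zs}. W n \<omega> z \<le> prior z / prior zs * r n * W n \<omega> zs)"
      using det_bound[where a="\<lambda>z e i. a n z \<omega> e i" and b="\<lambda>z e i. b n z \<omega> e i" and ca=ca and cb=cb and n=n and E=E and Zs=Zs and prior=prior and zs=zs and \<delta>=\<delta>,
          OF n E zs ppos pnn \<delta>pos gap\<delta> good]
      unfolding W_def r_def by simp
    have cnn: "\<forall>z\<in>Zs. 0 \<le> prior z / prior zs" using pnn ppos by simp
    have Ksum: "(\<Sum>z\<in>Zs - {zs}. prior z / prior zs) \<le> K"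
      unfolding K_def sum_divide_distrib[symmetric] using ppos pnn finZ
      by (intro divide_right_mono sum_mono2) auto
    have rnn: "0 \<le> r n" unfolding r_def by simp
    note pf = post_facts[OF finZ zs _ _ _ cnn Ksum rnn, of "W n \<omega>"]
    show ?thesis
    proof
      show "\<bar>W n \<omega> zs / (\<Sum>z\<in>Zs. W n \<omega> z) - 1\<bar> \<le> K * r n" using pf(1) D by blast
      show "K * r n < 1 \<longrightarrow> arg_max (\<lambda>z. W n \<omega> z / (\<Sum>z'\<in>Zs. W n \<omega> z')) Pz = zs"
      proof
        assume "K * r n < 1"
        then have "\<forall>z\<in>Zs - {zs}. W n \<omega> z / (\<Sum>z\<in>Zs. W n \<omega> z) < W n \<omega> zs / (\<Sum>z\<in>Zs. W n \<omega> z)"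
          using pf(2) D by blast
        then show "arg_max (\<lambda>z. W n \<omega> z / (\<Sum>z'\<in>Zs. W n \<omega> z')) Pz = zs"
          by (intro arg_max_strict[OF zs _ PZ]) auto
      qed
    qed
  qed
  have ev_n: "\<forall>\<^sub>F n in sequentially. n \<ge> 1" by (rule eventually_ge_at_top)
  show "(\<lambda>n. measure M {\<omega> \<in> space M. arg_max (\<lambda>z. W n \<omega> z / (\<Sum>z'\<in>Zs. W n \<omega> z')) Pz \<noteq> zs}) \<longlonglongrightarrow> 0"
  proof (rule tendsto_sandwich[of "\<lambda>_. 0" _ _ "\<lambda>n. measure M (Bad n)"])
    have "\<forall>\<^sub>F n in sequentially. K * r n < 1" using Kr by (rule order_tendstoD) simp
    with ev_n show "\<forall>\<^sub>F n in sequentially. measure M {\<omega> \<in> space M. arg_max (\<lambda>z. W n \<omega> z / (\<Sum>z'\<in>Zs. W n \<omega> z')) Pz \<noteq> zs} \<le> measure M (Bad n)"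
    proof eventually_elim
      case (elim n)
      show ?case
        by (rule P.finite_measure_mono[OF _ sBad]) (use core elim in blast)
    qed
  qed (auto simp: measBad)
  show "conv_in_prob M (\<lambda>n \<omega>. ereal (W n \<omega> zs / (\<Sum>z'\<in>Zs. W n \<omega> z'))) 1"
    unfolding conv_in_prob_def
  proof (intro allI impI)
    fix \<epsilon> :: real assume \<epsilon>: "0 < \<epsilon>"
    show "(\<lambda>n. measure M {\<omega> \<in> space M. ereal \<epsilon> < \<bar>ereal (W n \<omega> zs / (\<Sum>z'\<in>Zs. W n \<omega> z')) - ereal 1\<bar>}) \<longlonglongrightarrow> 0"
    proof (rule tendsto_sandwich[of "\<lambda>_. 0" _ _ "\<lambda>n. measure M (Bad n)"])
      have "\<forall>\<^sub>F n in sequentially. K * r n < \<epsilon>" using Kr \<epsilon> by (rule order_tendstoD)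
      with ev_n show "\<forall>\<^sub>F n in sequentially. measure M {\<omega> \<in> space M. ereal \<epsilon> < \<bar>ereal (W n \<omega> zs / (\<Sum>z'\<in>Zs. W n \<omega> z')) - ereal 1\<bar>} \<le> measure M (Bad n)"
      proof eventually_elim
        case (elim n)
        have "{\<omega> \<in> space M. ereal \<epsilon> < \<bar>ereal (W n \<omega> zs / (\<Sum>z'\<in>Zs. W n \<omega> z')) - ereal 1\<bar>} \<subseteq> Bad n"
        proof
          fix \<omega> assume \<omega>: "\<omega> \<in> {\<omega> \<in> space M. ereal \<epsilon> < \<bar>ereal (W n \<omega> zs / (\<Sum>z'\<in>Zs. W n \<omega> z')) - ereal 1\<bar>}"
          show "\<omega> \<in> Bad n"
          proof (rule ccontr)
            assume "\<omega> \<notin> Bad n"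
            with core[of n \<omega>] elim \<omega> have "\<bar>W n \<omega> zs / (\<Sum>z\<in>Zs. W n \<omega> z) - 1\<bar> < \<epsilon>" by auto
            with \<omega> show False by simp
          qed
        qed
        then show ?case by (rule P.finite_measure_mono[OF _ sBad])
      qed
    qed (auto simp: measBad)
  qed
qed

theorem theorem3:
  fixes p E :: nat
    and \<nu> :: "'y measure"
    and pd :: "nat \<Rightarrow> (nat \<Rightarrow> real) \<Rightarrow> 'y \<Rightarrow> real"
    and M :: "'w measure"
    and X :: "nat \<Rightarrow> nat \<Rightarrow> 'w \<Rightarrow> (nat \<Rightarrow> real)"
    and Y :: "nat \<Rightarrow> nat \<Rightarrow> 'w \<Rightarrow> 'y"
    and prior :: "nat set \<Rightarrow> real"
    and Pmod :: "nat set \<Rightarrow> ((nat \<Rightarrow> real) \<Rightarrow> 'y \<Rightarrow> real) set"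
    and phat :: "nat \<Rightarrow> nat \<Rightarrow> nat set \<Rightarrow> 'w \<Rightarrow> (nat \<Rightarrow> real) \<Rightarrow> 'y \<Rightarrow> real"
    and ghat :: "nat \<Rightarrow> nat set \<Rightarrow> 'w \<Rightarrow> (nat \<Rightarrow> real) \<Rightarrow> 'y \<Rightarrow> real"
    and zstar :: "nat set"
  assumes E_pos: "E \<ge> 1"
    and nu: "sigma_finite_measure \<nu>"
    \<comment> \<open>joint densities p_e(x,y) w.r.t. Lebesgue(R^p) x nu\<close>
    and dens_nonneg: "\<And>e x y. e < E \<Longrightarrow> 0 \<le> pd e x y"
    and dens_meas: "\<And>e. e < E \<Longrightarrow> (\<lambda>w. pd e (fst w) (snd w)) \<in> borel_measurable (Xmeas p \<Otimes>\<^sub>M \<nu>)"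
    \<comment> \<open>data: n i.i.d. draws from p_e(x,y) in each environment, independent across all (e,i)\<close>
    and M: "prob_space M"
    and data_distr: "\<And>e i. e < E \<Longrightarrow>
        distributed M (Xmeas p \<Otimes>\<^sub>M \<nu>) (\<lambda>\<omega>. (X e i \<omega>, Y e i \<omega>)) (\<lambda>w. ennreal (pd e (fst w) (snd w)))"
    and data_indep: "prob_space.indep_vars M (\<lambda>_. Xmeas p \<Otimes>\<^sub>M \<nu>)
        (\<lambda>ei \<omega>. (X (fst ei) (snd ei) \<omega>, Y (fst ei) (snd ei) \<omega>)) ({..<E} \<times> UNIV)"
    \<comment> \<open>prior on {0,1}^p\<close>
    and prior_nonneg: "\<And>z. z \<subseteq> {..<p} \<Longrightarrow> 0 \<le> prior z"
    and prior_sum: "(\<Sum>z\<in>Pow {..<p}. prior z) = 1"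
    \<comment> \<open>estimators: per-environment and pooled maximum likelihood in the model class\<close>
    and phat_in: "\<And>n e z \<omega>. e < E \<Longrightarrow> z \<subseteq> {..<p} \<Longrightarrow> phat n e z \<omega> \<in> Pmod z"
    and phat_max: "\<And>n e z \<omega> q. e < E \<Longrightarrow> z \<subseteq> {..<p} \<Longrightarrow> q \<in> Pmod z \<Longrightarrow>
        (\<Sum>i<n. elog (q (xsub z (X e i \<omega>)) (Y e i \<omega>)))
          \<le> (\<Sum>i<n. elog (phat n e z \<omega> (xsub z (X e i \<omega>)) (Y e i \<omega>)))"
    and ghat_in: "\<And>n z \<omega>. z \<subseteq> {..<p} \<Longrightarrow> ghat n z \<omega> \<in> Pmod z"
    and ghat_max: "\<And>n z \<omega> q. z \<subseteq> {..<p} \<Longrightarrow> q \<in> Pmod z \<Longrightarrow>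
        (\<Sum>e<E. \<Sum>i<n. elog (q (xsub z (X e i \<omega>)) (Y e i \<omega>)))
          \<le> (\<Sum>e<E. \<Sum>i<n. elog (ghat n z \<omega> (xsub z (X e i \<omega>)) (Y e i \<omega>)))"
    and phat_meas: "\<And>n e i z. e < E \<Longrightarrow> z \<subseteq> {..<p} \<Longrightarrow>
        (\<lambda>\<omega>. phat n e z \<omega> (xsub z (X e i \<omega>)) (Y e i \<omega>)) \<in> borel_measurable M"
    and ghat_meas: "\<And>n e i z. e < E \<Longrightarrow> z \<subseteq> {..<p} \<Longrightarrow>
        (\<lambda>\<omega>. ghat n z \<omega> (xsub z (X e i \<omega>)) (Y e i \<omega>)) \<in> borel_measurable M"
    \<comment> \<open>Invariance and uniqueness\<close>
    and zstar_sub: "zstar \<subseteq> {..<p}"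
    and invariance: "invariant_z p \<nu> E pd zstar"
    and uniqueness: "\<And>z. z \<subseteq> {..<p} \<Longrightarrow> invariant_z p \<nu> E pd z \<Longrightarrow> z = zstar"
    \<comment> \<open>Prior positivity\<close>
    and prior_pos: "prior zstar > 0"
    \<comment> \<open>Estimation consistency (the limits are finite expectations)\<close>
    and integrable_cond: "\<And>z e. z \<subseteq> {..<p} \<Longrightarrow> prior z > 0 \<Longrightarrow> e < E \<Longrightarrow>
        integrable (distr_z p \<nu> (pd e) z) (\<lambda>w. ln (cond_z p \<nu> (pd e) z (fst w) (snd w)))"
    and integrable_pooled: "\<And>z e. z \<subseteq> {..<p} \<Longrightarrow> prior z > 0 \<Longrightarrow> e < E \<Longrightarrow>
        integrable (distr_z p \<nu> (pd e) z) (\<lambda>w. ln (pooled_z p \<nu> E pd z (fst w) (snd w)))"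
    and consistent_p: "\<And>z. z \<subseteq> {..<p} \<Longrightarrow> prior z > 0 \<Longrightarrow>
        conv_in_prob M (\<lambda>n \<omega>. ereal (1 / (real n * real E)) *
            (\<Sum>i<n. \<Sum>e<E. elog (phat n e z \<omega> (xsub z (X e i \<omega>)) (Y e i \<omega>))))
          (exp_log_cond p \<nu> E pd z)"
    and consistent_g: "\<And>z. z \<subseteq> {..<p} \<Longrightarrow> prior z > 0 \<Longrightarrow>
        conv_in_prob M (\<lambda>n \<omega>. ereal (1 / (real n * real E)) *
            (\<Sum>i<n. \<Sum>e<E. elog (ghat n z \<omega> (xsub z (X e i \<omega>)) (Y e i \<omega>))))
          (exp_log_pooled p \<nu> E pd z)"
  shows "((\<lambda>n. measure M {\<omega> \<in> space M.
            arg_max (bip_post (Pow {..<p}) E prior phat ghat X Y n \<omega>) (\<lambda>z. z \<subseteq> {..<p}) \<noteq> zstar})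
           \<longlonglongrightarrow> 0)
         \<and> conv_in_prob M (\<lambda>n \<omega>. ereal (bip_post (Pow {..<p}) E prior phat ghat X Y n \<omega> zstar)) 1"
proof -
  interpret P: prob_space M by (rule M)
  interpret nu: sigma_finite_measure \<nu> by (rule nu)
  interpret PS: product_sigma_finite "\<lambda>_::nat. lborel :: real measure" by standard
  have tot: "(\<integral>\<^sup>+ w. ennreal (pd e (fst w) (snd w)) \<partial>(Xmeas p \<Otimes>\<^sub>M \<nu>)) = 1" if e: "e < E" for e
  proof -
    let ?N = "Xmeas p \<Otimes>\<^sub>M \<nu>"
    have d: "distr M ?N (\<lambda>\<omega>. (X e 0 \<omega>, Y e 0 \<omega>)) = density ?N (\<lambda>w. ennreal (pd e (fst w) (snd w)))"
      and mX: "(\<lambda>\<omega>. (X e 0 \<omega>, Y e 0 \<omega>)) \<in> measurable M ?N"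
      using data_distr[OF e, of 0] unfolding distributed_def by auto
    have "prob_space (distr M ?N (\<lambda>\<omega>. (X e 0 \<omega>, Y e 0 \<omega>)))" by (rule P.prob_space_distr[OF mX])
    then have "emeasure (density ?N (\<lambda>w. ennreal (pd e (fst w) (snd w)))) (space ?N) = 1"
      using d prob_space.emeasure_space_1 by fastforce
    moreover have "(\<integral>\<^sup>+ x. ennreal (pd e (fst x) (snd x)) * indicator (space ?N) x \<partial>?N) = (\<integral>\<^sup>+ x. ennreal (pd e (fst x) (snd x)) \<partial>?N)"
      by (rule nn_integral_cong) auto
    ultimately show ?thesis
      using emeasure_density[of "\<lambda>w. ennreal (pd e (fst w) (snd w))" ?N "space ?N"] dens_meas[OF e] by simp
  qed
  have JF1: "(\<lambda>w. joint_z p (pd e) z (fst w) (snd w)) \<in> borel_measurable (XZYmeas z \<nu>)" if "e < E" "z \<subseteq> {..<p}" for e z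
    using joint_facts(1)[OF nu dens_nonneg[OF that(1)] dens_meas[OF that(1)] tot[OF that(1)] that(2)] by blast
  have JF2: "marg_z p \<nu> (pd e) z \<in> borel_measurable (PiM z (\<lambda>_. lborel))" if "e < E" "z \<subseteq> {..<p}" for e z
    using joint_facts(2)[OF nu dens_nonneg[OF that(1)] dens_meas[OF that(1)] tot[OF that(1)] that(2)] by blast
  have JF3: "\<And>xz y. 0 \<le> joint_z p (pd e) z xz y" if "e < E" "z \<subseteq> {..<p}" for e z
    using joint_facts(3)[OF nu dens_nonneg[OF that(1)] dens_meas[OF that(1)] tot[OF that(1)] that(2)] by blast
  have JF4: "\<And>xz. 0 \<le> marg_z p \<nu> (pd e) z xz" if "e < E" "z \<subseteq> {..<p}" for e z
    using joint_facts(4)[OF nu dens_nonneg[OF that(1)] dens_meas[OF that(1)] tot[OF that(1)] that(2)] by blast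
  have JF5: "(\<integral>\<^sup>+ w. ennreal (joint_z p (pd e) z (fst w) (snd w)) \<partial>XZYmeas z \<nu>) = 1" if "e < E" "z \<subseteq> {..<p}" for e z
    using joint_facts(5)[OF nu dens_nonneg[OF that(1)] dens_meas[OF that(1)] tot[OF that(1)] that(2)] by blast
  have JF6: "AE xz in PiM z (\<lambda>_. lborel). ennreal (marg_z p \<nu> (pd e) z xz) = (\<integral>\<^sup>+ y. ennreal (joint_z p (pd e) z xz y) \<partial>\<nu>)" if "e < E" "z \<subseteq> {..<p}" for e z
    using joint_facts(6)[OF nu dens_nonneg[OF that(1)] dens_meas[OF that(1)] tot[OF that(1)] that(2)] by blast

  define T where "T z e = (\<integral>w. ln (pooled_z p \<nu> E pd z (fst w) (snd w)) \<partial>distr_z p \<nu> (pd e) z)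
      - (\<integral>w. ln (cond_z p \<nu> (pd e) z (fst w) (snd w)) \<partial>distr_z p \<nu> (pd e) z)" for z e
  have G: "T z e \<le> 0 \<and> (T z e = 0 \<longleftrightarrow> (AE w in XZYmeas z \<nu>. joint_z p (pd e) z (fst w) (snd w) =
            marg_z p \<nu> (pd e) z (fst w) * pooled_z p \<nu> E pd z (fst w) (snd w)))"
    if z: "z \<subseteq> {..<p}" and pz: "prior z > 0" and e: "e < E" for z e
  proof -
    have fz: "finite z" using z finite_subset by blast
    have sA: "sigma_finite_measure (PiM z (\<lambda>_. lborel :: real measure))" using PS.sigma_finite[OF fz] .
    have pooled_eq: "pooled_z p \<nu> E pd z xz y = (\<Sum>e'\<in>{..<E}. joint_z p (pd e') z xz y) / (\<Sum>e'\<in>{..<E}. marg_z p \<nu> (pd e') z xz)" for xz y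
      unfolding pooled_z_def ..
    have "T z e \<le> 0 \<and> (T z e = 0 \<longleftrightarrow> (AE w in PiM z (\<lambda>_. lborel) \<Otimes>\<^sub>M \<nu>. joint_z p (pd e) z (fst w) (snd w) =
            marg_z p \<nu> (pd e) z (fst w) * ((\<Sum>e'\<in>{..<E}. joint_z p (pd e') z (fst w) (snd w)) / (\<Sum>e'\<in>{..<E}. marg_z p \<nu> (pd e') z (fst w)))))"
      unfolding T_def pooled_eq cond_z_def distr_z_def XZYmeas_def
    proof (rule gibbs[OF sA nu, of "{..<E}" e "\<lambda>e'. joint_z p (pd e') z" "\<lambda>e'. marg_z p \<nu> (pd e') z",
             unfolded cond_z_def distr_z_def XZYmeas_def])
      show "finite {..<E}" by simp
      show "e \<in> {..<E}" using e by simp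
      show "\<And>e'. e' \<in> {..<E} \<Longrightarrow> (\<lambda>w. joint_z p (pd e') z (fst w) (snd w)) \<in> borel_measurable (PiM z (\<lambda>_. lborel) \<Otimes>\<^sub>M \<nu>)"
        using JF1[OF _ z] unfolding XZYmeas_def by auto
      show "\<And>e'. e' \<in> {..<E} \<Longrightarrow> marg_z p \<nu> (pd e') z \<in> borel_measurable (PiM z (\<lambda>_. lborel))"
        using JF2[OF _ z] by auto
      show "\<And>e' x y. e' \<in> {..<E} \<Longrightarrow> 0 \<le> joint_z p (pd e') z x y" using JF3[OF _ z] by auto
      show "\<And>e' x. e' \<in> {..<E} \<Longrightarrow> 0 \<le> marg_z p \<nu> (pd e') z x" using JF4[OF _ z] by auto
      show "(\<integral>\<^sup>+ w. ennreal (joint_z p (pd e) z (fst w) (snd w)) \<partial>(PiM z (\<lambda>_. lborel) \<Otimes>\<^sub>M \<nu>)) = 1"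
        using JF5[OF e z] unfolding XZYmeas_def .
      show "\<And>e'. e' \<in> {..<E} \<Longrightarrow> AE x in PiM z (\<lambda>_. lborel). ennreal (marg_z p \<nu> (pd e') z x) = (\<integral>\<^sup>+ y. ennreal (joint_z p (pd e') z x y) \<partial>\<nu>)"
        using JF6[OF _ z] by auto
      show "integrable (density (PiM z (\<lambda>_. lborel) \<Otimes>\<^sub>M \<nu>) (\<lambda>w. ennreal (joint_z p (pd e) z (fst w) (snd w))))
          (\<lambda>w. ln (joint_z p (pd e) z (fst w) (snd w) / marg_z p \<nu> (pd e) z (fst w)))"
        using integrable_cond[OF z pz e] unfolding cond_z_def distr_z_def XZYmeas_def .
      show "integrable (density (PiM z (\<lambda>_. lborel) \<Otimes>\<^sub>M \<nu>) (\<lambda>w. ennreal (joint_z p (pd e) z (fst w) (snd w))))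
          (\<lambda>w. ln ((\<Sum>e'\<in>{..<E}. joint_z p (pd e') z (fst w) (snd w)) / (\<Sum>e'\<in>{..<E}. marg_z p \<nu> (pd e') z (fst w))))"
        using integrable_pooled[OF z pz e] unfolding pooled_eq distr_z_def XZYmeas_def .
    qed
    then show ?thesis unfolding XZYmeas_def pooled_eq .
  qed
  have Delta: "exp_log_pooled p \<nu> E pd z - exp_log_cond p \<nu> E pd z = (1 / real E) * (\<Sum>e<E. T z e)" for z
    unfolding exp_log_pooled_def exp_log_cond_def T_def
    by (simp add: sum_subtractf right_diff_distrib)
  have Dstar: "exp_log_pooled p \<nu> E pd zstar - exp_log_cond p \<nu> E pd zstar = 0"
  proof -
    obtain q where q: "\<forall>e<E. AE w in XZYmeas zstar \<nu>.
        joint_z p (pd e) zstar (fst w) (snd w) = marg_z p \<nu> (pd e) zstar (fst w) * q (fst w) (snd w)"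
      using invariance unfolding invariant_z_def by blast
    have qall: "AE w in XZYmeas zstar \<nu>. \<forall>e\<in>{..<E}.
        joint_z p (pd e) zstar (fst w) (snd w) = marg_z p \<nu> (pd e) zstar (fst w) * q (fst w) (snd w)"
      by (rule AE_finite_allI) (use q in auto)
    have "T zstar e = 0" if e: "e < E" for e
    proof -
      have "AE w in XZYmeas zstar \<nu>. joint_z p (pd e) zstar (fst w) (snd w) =
            marg_z p \<nu> (pd e) zstar (fst w) * pooled_z p \<nu> E pd zstar (fst w) (snd w)"
        using qall
      proof eventually_elim
        case (elim w)
        let ?J = "\<lambda>e. joint_z p (pd e) zstar (fst w) (snd w)"
        let ?m = "\<lambda>e. marg_z p \<nu> (pd e) zstar (fst w)"
        have sJ: "(\<Sum>e<E. ?J e) = (\<Sum>e<E. ?m e) * q (fst w) (snd w)"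
          using elim by (simp add: sum_distrib_right)
        show ?case
        proof (cases "(\<Sum>e<E. ?m e) = 0")
          case True
          have "\<forall>e'\<in>{..<E}. ?m e' = 0"
            using True JF4[OF _ zstar_sub] by (subst sum_nonneg_eq_0_iff[symmetric]) auto
          then show ?thesis using elim e by auto
        next
          case False
          then have "pooled_z p \<nu> E pd zstar (fst w) (snd w) = q (fst w) (snd w)"
            unfolding pooled_z_def using sJ by simp
          then show ?thesis using elim e by auto
        qed
      qed
      then show ?thesis using G[OF zstar_sub prior_pos e] by blast
    qed
    then show ?thesis unfolding Delta by simp
  qed
  have gap: "exp_log_pooled p \<nu> E pd z - exp_log_cond p \<nu> E pd z
           < exp_log_pooled p \<nu> E pd zstar - exp_log_cond p \<nu> E pd zstar"
    if z: "z \<in> Pow {..<p}" and pz: "prior z > 0" and nz: "z \<noteq> zstar" for z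
  proof -
    have zs: "z \<subseteq> {..<p}" using z by simp
    have "\<exists>e<E. T z e \<noteq> 0"
    proof (rule ccontr)
      assume "\<not> (\<exists>e<E. T z e \<noteq> 0)"
      then have "\<forall>e<E. AE w in XZYmeas z \<nu>. joint_z p (pd e) z (fst w) (snd w) =
            marg_z p \<nu> (pd e) z (fst w) * pooled_z p \<nu> E pd z (fst w) (snd w)"
        using G[OF zs pz] by blast
      then have "invariant_z p \<nu> E pd z" unfolding invariant_z_def by blast
      then show False using uniqueness[OF zs] nz by blast
    qed
    then obtain e where e: "e < E" "T z e < 0" using G[OF zs pz] by force
    have "(\<Sum>e'<E. T z e') = T z e + (\<Sum>e'\<in>{..<E} - {e}. T z e')"
      by (rule sum.remove) (use e in auto)
    also have "(\<Sum>e'\<in>{..<E} - {e}. T z e') \<le> 0" using G[OF zs pz] by (intro sum_nonpos) auto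
    finally have sneg: "(\<Sum>e'<E. T z e') < 0" using e by linarith
    have "0 < 1 / real E" using E_pos by simp
    then have "(1 / real E) * (\<Sum>e<E. T z e) < 0" using sneg by (rule mult_pos_neg)
    then show ?thesis unfolding Delta[of z] using Dstar by simp
  qed
  have post_eq: "bip_post (Pow {..<p}) E prior phat ghat X Y n \<omega> =
      (\<lambda>z. (\<lambda>n \<omega> z. prior z * (\<Prod>e<E. \<Prod>i<n. (\<lambda>n z \<omega> e i. ghat n z \<omega> (xsub z (X e i \<omega>)) (Y e i \<omega>)) n z \<omega> e i /
                                              (\<lambda>n z \<omega> e i. phat n e z \<omega> (xsub z (X e i \<omega>)) (Y e i \<omega>)) n z \<omega> e i)) n \<omega> z /
         (\<Sum>z'\<in>Pow {..<p}. (\<lambda>n \<omega> z. prior z * (\<Prod>e<E. \<Prod>i<n. (\<lambda>n z \<omega> e i. ghat n z \<omega> (xsub z (X e i \<omega>)) (Y e i \<omega>)) n z \<omega> e i /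
                                              (\<lambda>n z \<omega> e i. phat n e z \<omega> (xsub z (X e i \<omega>)) (Y e i \<omega>)) n z \<omega> e i)) n \<omega> z'))" for n \<omega>
    unfolding bip_post_def[abs_def] bip_weight_def by simp
  note BP = bip_prob[where M=M and E=E and Zs="Pow {..<p}" and Pz="\<lambda>z. z \<subseteq> {..<p}" and prior=prior and zs=zstar
      and a="\<lambda>n z \<omega> e i. ghat n z \<omega> (xsub z (X e i \<omega>)) (Y e i \<omega>)"
      and b="\<lambda>n z \<omega> e i. phat n e z \<omega> (xsub z (X e i \<omega>)) (Y e i \<omega>)"
      and ca="exp_log_pooled p \<nu> E pd" and cb="exp_log_cond p \<nu> E pd"]
  have BP': "(\<lambda>n. measure M {\<omega> \<in> space M. arg_max (bip_post (Pow {..<p}) E prior phat ghat X Y n \<omega>) (\<lambda>z. z \<subseteq> {..<p}) \<noteq> zstar}) \<longlonglongrightarrow> 0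
     \<and> conv_in_prob M (\<lambda>n \<omega>. ereal (bip_post (Pow {..<p}) E prior phat ghat X Y n \<omega> zstar)) 1"
    unfolding post_eq
  proof (rule conjI; rule BP)
  qed (use M E_pos zstar_sub prior_pos prior_nonneg ghat_meas phat_meas consistent_g consistent_p gap in auto)
  show ?thesis using BP' .
qed

end
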